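(* Let $m,d\geq1$ and let $\mathcal{A}\in\mathbb{T}_{2m,d}$ be Einstein-symmetric. If Z-eigenvalues of $\mathcal{A}$ exist, then $\lambda^E_{\max}(\mathcal{A})\geq\lambda^Z_{\max}(\mathcal{A})$.
   Context: $\mathbb{T}_{2m,d}$ is the set of real tensors $\mathcal{A}=(a_{i_1\ldots i_{2m}})$ of order $2m$ with every index in $\{1,\ldots,d\}$. The Einstein product of $\mathcal{A},\mathcal{B}\in\mathbb{T}_{2m,d}$ is $(\mathcal{A}*\mathcal{B})_{i_1\ldots i_mj_1\ldots j_m}=\sum_{k_1,\ldots,k_m}a_{i_1\ldots i_mk_1\ldots k_m}b_{k_1\ldots k_mj_1\ldots j_m}$. Transpose: $(\mathcal{A}^\top)_{i_1\ldots i_mj_1\ldots j_m}=a_{j_1\ldots j_mi_1\ldots i_m}$; Einstein-symmetric means $\mathcal{A}^\top=\mathcal{A}$. Diagonal means $a_{i_1\ldots i_mj_1\ldots j_m}=0$ unless $i_k=j_k$ for all $k$; $\mathcal{I}^E$ is diagonal with all entries $a_{i_1\ldots i_mi_1\ldots i_m}=1$; $\mathcal{U}$ is Einstein-orthogonal if $\mathcal{U}^\top*\mathcal{U}=\mathcal{I}^E$. An Einstein-symmetric $\mathcal{A}$ has a decomposition $\mathcal{A}=\mathcal{U}*\mathcal{D}*\mathcal{U}^\top$ with $\mathcal{U}$ Einstein-orthogonal and $\mathcal{D}$ Einstein-symmetric diagonal; the diagonal entries $d_{i_1\ldots i_mi_1\ldots i_m}$ of $\mathcal{D}$ are the Einstein-eigenvalues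 of $\mathcal{A}$ (equivalently, the eigenvalues of the $d^m\times d^m$ matrix $f(\mathcal{A})_{ij}=a_{i_1\ldots i_mj_1\ldots j_m}$, $i=i_1+\sum_{k=2}^m(i_k-1)d^{k-1}$, $j$ likewise), and $\lambda^E_{\max}(\mathcal{A})$ is the largest of them. A real $\lambda$ is a Z-eigenvalue of $\mathcal{A}$ if there is $x\in\mathbb{R}^d$ with $x^\top x=1$ and $\mathcal{A}x^{2m-1}=\lambda x$, where $(\mathcal{A}x^{2m-1})_i=\sum_{i_2,\ldots,i_{2m}}a_{ii_2\ldots i_{2m}}x_{i_2}\cdots x_{i_{2m}}$; $\lambda^Z_{\max}(\mathcal{A})$ is the largest Z-eigenvalue. *)

theory Defs
  imports Complex_Main "Jordan_Normal_Form.Char_Poly"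
begin

text \<open>A tensor in T_{2m,d} is represented as a function from index lists to reals;
  only lists of length 2m with all entries in {0..<d} (0-based indices) are relevant.\<close>

type_synonym tensor = "nat list \<Rightarrow> real"

definition idx_lists :: "nat \<Rightarrow> nat \<Rightarrow> nat list set" where
  "idx_lists k d = {xs. length xs = k \<and> set xs \<subseteq> {..<d}}"

definition einstein_symmetric :: "nat \<Rightarrow> nat \<Rightarrow> tensor \<Rightarrow> bool" where
  "einstein_symmetric m d A \<longleftrightarrow>
     (\<forall>is \<in> idx_lists m d. \<forall>js \<in> idx_lists m d. A (is @ js) = A (js @ is))"

text \<open>Multi-index (i_1,...,i_m) (0-based) corresponding to the linear index
  n = i_1 + i_2 d + ... + i_m d^(m-1) (0-based version of the paper's unfolding).\<close>
definition digits :: "nat \<Rightarrow> nat \<Rightarrow> nat \<Rightarrow> nat list" where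
  "digits m d n = map (\<lambda>k. n div d ^ k mod d) [0..<m]"

definition unfold_mat :: "nat \<Rightarrow> nat \<Rightarrow> tensor \<Rightarrow> real mat" where
  "unfold_mat m d A = mat (d ^ m) (d ^ m) (\<lambda>(i, j). A (digits m d i @ digits m d j))"

definition einstein_eigenvalue :: "nat \<Rightarrow> nat \<Rightarrow> tensor \<Rightarrow> real \<Rightarrow> bool" where
  "einstein_eigenvalue m d A lam \<longleftrightarrow> eigenvalue (unfold_mat m d A) lam"

definition lambda_E_max :: "nat \<Rightarrow> nat \<Rightarrow> tensor \<Rightarrow> real" where
  "lambda_E_max m d A = Max {lam. einstein_eigenvalue m d A lam}"

definition tensor_apply :: "nat \<Rightarrow> nat \<Rightarrow> tensor \<Rightarrow> (nat \<Rightarrow> real) \<Rightarrow> nat \<Rightarrow> real" where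
  "tensor_apply m d A x i =
     (\<Sum>js \<in> idx_lists (2 * m - 1) d. A (i # js) * (\<Prod>k<2 * m - 1. x (js ! k)))"

definition Z_eigenvalue :: "nat \<Rightarrow> nat \<Rightarrow> tensor \<Rightarrow> real \<Rightarrow> bool" where
  "Z_eigenvalue m d A lam \<longleftrightarrow>
     (\<exists>x :: nat \<Rightarrow> real. (\<Sum>i<d. x i ^ 2) = 1 \<and>
        (\<forall>i<d. tensor_apply m d A x i = lam * x i))"

text \<open>Largest Z-eigenvalue (the set of Z-eigenvalues is compact, so its supremum is its maximum).\<close>
definition lambda_Z_max :: "nat \<Rightarrow> nat \<Rightarrow> tensor \<Rightarrow> real" where
  "lambda_Z_max m d A = Sup {lam. Z_eigenvalue m d A lam}"

end

theory Submission
  imports Defs "HOL-Analysis.Function_Topology"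
begin


definition qf :: "nat \<Rightarrow> (nat \<Rightarrow> nat \<Rightarrow> real) \<Rightarrow> (nat \<Rightarrow> real) \<Rightarrow> (nat \<Rightarrow> real) \<Rightarrow> real" where
  "qf n C v w = (\<Sum>i<n. \<Sum>j<n. C i j * v i * w j)"

lemma qf_expand:
  "qf n C (\<lambda>i. v i + t * w i) (\<lambda>i. v i + t * w i) =
   qf n C v v + t * (qf n C v w + qf n C w v) + t^2 * qf n C w w"
  by (simp add: qf_def algebra_simps sum.distrib sum_distrib_left power2_eq_square)

lemma qf_sym:
  assumes "\<forall>i<n. \<forall>j<n. C i j = C j i"
  shows "qf n C w v = qf n C v w"
  unfolding qf_def using assms
  by (subst sum.swap) (auto intro!: sum.cong simp: mult_ac)

lemma qf_scale: "qf n C (\<lambda>i. c * v i) (\<lambda>i. c * v i) = c^2 * qf n C v v"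
  by (simp add: qf_def sum_distrib_left power2_eq_square mult_ac)

lemma cont_coord[continuous_intros]: "continuous_on S (\<lambda>x::nat\<Rightarrow>real. x i)"
  by (rule continuous_on_subset[OF continuous_on_product_coordinates]) simp

lemma quad_nonpos:
  fixes a b :: real
  assumes "\<forall>t. a * t^2 + b * t \<le> 0"
  shows "b = 0"
proof (rule ccontr)
  assume b0: "b \<noteq> 0"
  define t where "t = b / (\<bar>a\<bar> + 1)"
  have pos: "\<bar>a\<bar> + 1 > 0" by simp
  have t0: "t \<noteq> 0" using b0 pos unfolding t_def by simp
  have bt: "b - \<bar>a\<bar> * t = t"
    unfolding t_def using pos by (simp add: field_simps)
  have h1: "a * t^2 + b * t \<ge> - \<bar>a\<bar> * t^2 + b * t"
    by (smt (verit, best) abs_ge_minus_self mult_right_mono zero_le_power2)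
  have h2: "- \<bar>a\<bar> * t^2 + b * t = t * (b - \<bar>a\<bar> * t)"
    by (simp add: power2_eq_square algebra_simps)
  have h3: "t * t > 0" using t0 by (cases "t > 0") (auto simp: mult_neg_neg)
  have "a * t^2 + b * t \<le> 0" using assms by blast
  thus False using h1 h2 h3 bt by simp
qed

lemma sym_max_eig:
  fixes C :: "nat \<Rightarrow> nat \<Rightarrow> real"
  assumes sym: "\<forall>i<n. \<forall>j<n. C i j = C j i" and y: "(\<Sum>i<n. y i ^ 2) = 1"
  shows "\<exists>\<mu> v. (\<forall>i<n. (\<Sum>j<n. C i j * v j) = \<mu> * v i) \<and> (\<exists>i<n. v i \<noteq> 0)
           \<and> qf n C y y \<le> \<mu>"
proof -
  define S where "S = {v::nat\<Rightarrow>real. (\<Sum>i<n. v i ^ 2) = 1 \<and> (\<forall>i. i \<ge> n \<longrightarrow> v i = 0)}"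
  define K where "K = PiE UNIV (\<lambda>i::nat. if i < n then {-1..1::real} else {0})"
  have "compactin (product_topology (\<lambda>i. euclidean) UNIV) K"
    unfolding K_def compactin_PiE by auto
  hence cK: "compact K" by (simp add: euclidean_product_topology)
  have cl: "closed S"
  proof -
    have "closed {v::nat\<Rightarrow>real. (\<Sum>i<n. v i ^ 2) = 1}"
      by (rule closed_Collect_eq) (intro continuous_intros)+
    moreover have "closed {v::nat\<Rightarrow>real. \<forall>i. i \<ge> n \<longrightarrow> v i = 0}"
      by (intro closed_Collect_all closed_Collect_imp closed_Collect_eq continuous_intros) auto
    ultimately show ?thesis unfolding S_def by (simp add: Collect_conj_eq closed_Int)
  qed
  have SK: "S \<subseteq> K"
  proof
    fix v assume v: "v \<in> S"
    { fix i assume i: "i < n"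
      have "v i ^ 2 \<le> (\<Sum>i<n. v i ^ 2)"
        by (rule member_le_sum) (use i in auto)
      hence "v i ^ 2 \<le> 1" using v by (simp add: S_def)
      hence "\<bar>v i\<bar> \<le> 1" using abs_square_le_1 by blast
    }
    thus "v \<in> K" using v unfolding K_def S_def by (auto simp: abs_le_iff)
  qed
  have cS: "compact S"
    using compact_Int_closed[OF cK cl] SK by (simp add: Int_absorb1)
  define y' where "y' = (\<lambda>i. if i < n then y i else 0)"
  have y'S: "y' \<in> S" using y unfolding S_def y'_def by simp
  have "\<exists>x\<in>S. \<forall>z\<in>S. qf n C z z \<le> qf n C x x"
    by (rule continuous_attains_sup[OF cS]) (use y'S in \<open>auto simp: qf_def intro!: continuous_intros\<close>)
  then obtain v where vS: "v \<in> S" and vmax: "\<And>z. z \<in> S \<Longrightarrow> qf n C z z \<le> qf n C v v" by blast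
  define \<mu> where "\<mu> = qf n C v v"
  have qy: "qf n C y y = qf n C y' y'" unfolding qf_def y'_def by simp
  have gen: "qf n C w w \<le> \<mu> * (\<Sum>i<n. w i ^ 2)" for w
  proof (cases "(\<Sum>i<n. w i ^ 2) = 0")
    case True
    hence "\<forall>i\<in>{..<n}. w i ^ 2 = 0" by (subst sum_nonneg_eq_0_iff[symmetric]) auto
    hence "qf n C w w = 0" unfolding qf_def by simp
    thus ?thesis using True by simp
  next
    case False
    define s where "s = (\<Sum>i<n. w i ^ 2)"
    have s0: "s > 0" using False unfolding s_def by (simp add: order_neq_le_trans sum_nonneg)
    define c where "c = 1 / sqrt s"
    define z where "z = (\<lambda>i. if i < n then c * w i else 0)"
    have c2: "c^2 = 1 / s" unfolding c_def using s0 by (simp add: power_divide)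
    have "(\<Sum>i<n. z i ^ 2) = c^2 * s" unfolding z_def s_def
      by (simp add: sum_distrib_left power_mult_distrib)
    hence "z \<in> S" unfolding S_def z_def using c2 s0 by simp
    hence "qf n C z z \<le> \<mu>" using vmax \<mu>_def by blast
    moreover have "qf n C z z = c^2 * qf n C w w"
    proof -
      have "qf n C z z = qf n C (\<lambda>i. c * w i) (\<lambda>i. c * w i)" unfolding qf_def z_def by simp
      thus ?thesis by (simp only: qf_scale)
    qed
    ultimately have "qf n C w w / s \<le> \<mu>" using c2 by simp
    thus ?thesis using s0 unfolding s_def[symmetric] by (simp add: field_simps)
  qed
  define r where "r = (\<lambda>j. (\<Sum>i<n. C j i * v i) - \<mu> * v j)"
  have v1: "(\<Sum>i<n. v i ^ 2) = 1" using vS S_def by simp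
  have key: "\<forall>t. (qf n C r r - \<mu> * (\<Sum>i<n. r i ^ 2)) * t^2 + (2 * (\<Sum>i<n. r i ^ 2)) * t \<le> 0"
  proof
    fix t
    have e1: "qf n C v r = (\<Sum>j<n. r j * (\<Sum>i<n. C j i * v i))"
      unfolding qf_def using sym
      by (subst sum.swap) (auto simp: sum_distrib_left intro!: sum.cong)
    have "(\<Sum>j<n. r j ^ 2) = (\<Sum>j<n. r j * (\<Sum>i<n. C j i * v i)) - \<mu> * (\<Sum>j<n. r j * v j)"
    proof -
      have rj: "r j = (\<Sum>i<n. C j i * v i) - \<mu> * v j" for j by (simp add: r_def)
      have "r j ^ 2 = r j * (\<Sum>i<n. C j i * v i) - \<mu> * (r j * v j)" for j
      proof -
        have "r j ^ 2 = r j * ((\<Sum>i<n. C j i * v i) - \<mu> * v j)" by (metis power2_eq_square rj)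
        thus ?thesis by (simp add: algebra_simps)
      qed
      hence "(\<Sum>j<n. r j ^ 2) = (\<Sum>j<n. r j * (\<Sum>i<n. C j i * v i) - \<mu> * (r j * v j))" by simp
      thus ?thesis by (simp add: sum_subtractf sum_distrib_left)
    qed
    hence rr: "(\<Sum>j<n. r j ^ 2) = qf n C v r - \<mu> * (\<Sum>j<n. r j * v j)" using e1 by simp
    have "qf n C (\<lambda>i. v i + t * r i) (\<lambda>i. v i + t * r i) \<le> \<mu> * (\<Sum>i<n. (v i + t * r i) ^ 2)"
      by (rule gen)
    also have "(\<Sum>i<n. (v i + t * r i) ^ 2) = (\<Sum>i<n. v i ^ 2) + 2 * t * (\<Sum>i<n. r i * v i) + t^2 * (\<Sum>i<n. r i ^ 2)"
      by (simp add: power2_eq_square algebra_simps sum.distrib sum_distrib_left)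
    finally have "\<mu> + t * (2 * qf n C v r) + t^2 * qf n C r r \<le> \<mu> * (1 + 2 * t * (\<Sum>i<n. r i * v i) + t^2 * (\<Sum>i<n. r i ^ 2))"
      unfolding qf_expand qf_sym[OF sym, of r v] \<mu>_def[symmetric] v1 by simp
    then show "(qf n C r r - \<mu> * (\<Sum>i<n. r i ^ 2)) * t^2 + (2 * (\<Sum>i<n. r i ^ 2)) * t \<le> 0"
      unfolding rr by (simp add: algebra_simps)
  qed
  have "(\<Sum>i<n. r i ^ 2) = 0" using quad_nonpos[OF key] by simp
  hence r0: "\<forall>i\<in>{..<n}. r i ^ 2 = 0" by (subst sum_nonneg_eq_0_iff[symmetric]) auto
  have ev: "\<forall>i<n. (\<Sum>j<n. C i j * v j) = \<mu> * v i" using r0 unfolding r_def by simp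
  have nz: "\<exists>i<n. v i \<noteq> 0"
  proof (rule ccontr)
    assume "\<not> ?thesis" hence "(\<Sum>i<n. v i ^ 2) = 0" by simp
    thus False using v1 by simp
  qed
  have "qf n C y y \<le> \<mu>" using vmax[OF y'S] qy \<mu>_def by simp
  thus ?thesis using ev nz by blast
qed



lemma prod_nth_eq: "(\<Prod>k<length xs. f (xs ! k)) = prod_list (map f xs)"
proof (induction xs)
  case Nil thus ?case by simp
next
  case (Cons a xs)
  have "(\<Prod>k<length (a # xs). f ((a # xs) ! k)) = f a * (\<Prod>k<length xs. f (xs ! k))"
    by (simp add: prod.lessThan_Suc_shift del: prod.lessThan_Suc)
  thus ?case using Cons by simp
qed

lemma idx_lists_append:
  "idx_lists (a + b) d = (\<lambda>(p, q). p @ q) ` (idx_lists a d \<times> idx_lists b d)"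
proof
  show "idx_lists (a + b) d \<subseteq> (\<lambda>(p, q). p @ q) ` (idx_lists a d \<times> idx_lists b d)"
  proof
    fix l assume l: "l \<in> idx_lists (a + b) d"
    have "l = (\<lambda>(p, q). p @ q) (take a l, drop a l)" by simp
    moreover have "(take a l, drop a l) \<in> idx_lists a d \<times> idx_lists b d"
      using l unfolding idx_lists_def by (auto dest: in_set_takeD in_set_dropD)
    ultimately show "l \<in> (\<lambda>(p, q). p @ q) ` (idx_lists a d \<times> idx_lists b d)" by blast
  qed
qed (auto simp: idx_lists_def)

lemma inj_append: "inj_on (\<lambda>(p, q). p @ q) (idx_lists a d \<times> idx_lists b d)"
  by (auto simp: inj_on_def idx_lists_def)

lemma sum_idx_append:
  "(\<Sum>l\<in>idx_lists (a + b) d. g l) = (\<Sum>p\<in>idx_lists a d. \<Sum>q\<in>idx_lists b d. g (p @ q))"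
proof -
  have "(\<Sum>l\<in>idx_lists (a + b) d. g l) = (\<Sum>pq\<in>idx_lists a d \<times> idx_lists b d. g ((\<lambda>(p, q). p @ q) pq))"
    unfolding idx_lists_append by (rule sum.reindex[OF inj_append, unfolded comp_def])
  also have "\<dots> = (\<Sum>p\<in>idx_lists a d. \<Sum>q\<in>idx_lists b d. g (p @ q))"
    by (subst sum.cartesian_product) (simp add: case_prod_beta)
  finally show ?thesis .
qed

lemma idx_lists_Suc:
  "idx_lists (Suc k) d = (\<lambda>(i, js). i # js) ` ({..<d} \<times> idx_lists k d)"
proof
  show "idx_lists (Suc k) d \<subseteq> (\<lambda>(i, js). i # js) ` ({..<d} \<times> idx_lists k d)"
  proof
    fix l assume l: "l \<in> idx_lists (Suc k) d"
    then obtain i js where "l = i # js" unfolding idx_lists_def by (cases l) auto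
    thus "l \<in> (\<lambda>(i, js). i # js) ` ({..<d} \<times> idx_lists k d)"
      using l unfolding idx_lists_def by force
  qed
qed (auto simp: idx_lists_def)

lemma sum_idx_Suc:
  "(\<Sum>l\<in>idx_lists (Suc k) d. g l) = (\<Sum>i<d. \<Sum>js\<in>idx_lists k d. g (i # js))"
proof -
  have inj: "inj_on (\<lambda>(i, js). i # js) ({..<d} \<times> idx_lists k d)"
    by (auto simp: inj_on_def)
  have "(\<Sum>l\<in>idx_lists (Suc k) d. g l) = (\<Sum>p\<in>{..<d} \<times> idx_lists k d. g ((\<lambda>(i, js). i # js) p))"
    unfolding idx_lists_Suc by (rule sum.reindex[OF inj, unfolded comp_def])
  also have "\<dots> = (\<Sum>i<d. \<Sum>js\<in>idx_lists k d. g (i # js))"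
    by (subst sum.cartesian_product) (simp add: case_prod_beta)
  finally show ?thesis .
qed

lemma idx_lists_0: "idx_lists 0 d = {[]}"
  by (auto simp: idx_lists_def)

lemma sum_sq_prod:
  "(\<Sum>l\<in>idx_lists k d. (prod_list (map x l))^2) = (\<Sum>i<d. (x::nat\<Rightarrow>real) i ^ 2) ^ k"
proof (induction k)
  case 0 thus ?case by (simp add: idx_lists_0)
next
  case (Suc k)
  have "(\<Sum>l\<in>idx_lists (Suc k) d. (prod_list (map x l))^2)
      = (\<Sum>i<d. \<Sum>js\<in>idx_lists k d. x i ^ 2 * (prod_list (map x js))^2)"
    unfolding sum_idx_Suc by (simp add: power_mult_distrib)
  also have "\<dots> = (\<Sum>i<d. x i ^ 2) * (\<Sum>js\<in>idx_lists k d. (prod_list (map x js))^2)"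
    by (simp add: sum_distrib_left sum_distrib_right sum.swap[of _ "{..<d}"])
  finally show ?case using Suc by simp
qed

lemma digits_Suc: "digits (Suc m) d a = (a mod d) # digits m d (a div d)"
  unfolding digits_def
  by (simp add: upt_conv_Cons map_Suc_upt[symmetric] del: upt_Suc) (simp add: div_mult2_eq)

lemma digits_in: assumes "d \<ge> 1" shows "digits m d a \<in> idx_lists m d"
  using assms unfolding digits_def idx_lists_def by auto

lemma digits_inj: "inj_on (digits m d) {..<d ^ m}"
proof (induction m)
  case 0 thus ?case by (simp add: inj_on_def)
next
  case (Suc m)
  show ?case
  proof (rule inj_onI)
    fix a b assume a: "a \<in> {..<d ^ Suc m}" and b: "b \<in> {..<d ^ Suc m}"
      and eq: "digits (Suc m) d a = digits (Suc m) d b"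
    have ad: "a div d < d ^ m" using a by (simp add: div_less_iff_less_mult mult.commute less_mult_imp_div_less)
    have bd: "b div d < d ^ m" using b by (simp add: less_mult_imp_div_less mult.commute)
    from eq have m: "a mod d = b mod d" and dd: "digits m d (a div d) = digits m d (b div d)"
      by (simp_all add: digits_Suc)
    have "a div d = b div d" using Suc.IH dd ad bd by (auto simp: inj_on_def)
    thus "a = b" using m by (metis div_mult_mod_eq)
  qed
qed

lemma digits_surj: assumes "d \<ge> 1" shows "digits m d ` {..<d ^ m} = idx_lists m d"
proof (induction m)
  case 0 thus ?case by (auto simp: idx_lists_0 digits_def)
next
  case (Suc m)
  show ?case
  proof
    show "digits (Suc m) d ` {..<d ^ Suc m} \<subseteq> idx_lists (Suc m) d" using digits_in[OF assms] by auto
    show "idx_lists (Suc m) d \<subseteq> digits (Suc m) d ` {..<d ^ Suc m}"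
    proof
      fix l assume l: "l \<in> idx_lists (Suc m) d"
      then obtain i js where l': "l = i # js" and i: "i < d" and js: "js \<in> idx_lists m d"
        using idx_lists_Suc by auto
      then obtain b where b: "b < d ^ m" and bj: "js = digits m d b" using Suc.IH by auto
      define a where "a = i + d * b"
      have "a mod d = i" "a div d = b" using i unfolding a_def by auto
      hence "digits (Suc m) d a = l" using l' bj by (simp add: digits_Suc)
      moreover have "a < d ^ Suc m"
      proof -
        have "a < d + d * b" using i unfolding a_def by simp
        also have "\<dots> = d * (b + 1)" by simp
        also have "\<dots> \<le> d * d ^ m" using b by (intro mult_le_mono2) simp
        finally show ?thesis by simp
      qed
      ultimately show "l \<in> digits (Suc m) d ` {..<d ^ Suc m}" by blast
    qed
  qed
qed

lemma digits_bij: assumes "d \<ge> 1" shows "bij_betw (digits m d) {..<d ^ m} (idx_lists m d)"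
  using digits_inj digits_surj[OF assms] by (simp add: bij_betw_def)



lemma Z_le_eig:
  fixes m d :: nat and A :: tensor
  assumes "m \<ge> 1" and d1: "d \<ge> 1"
    and sy: "einstein_symmetric m d A"
    and Z: "Z_eigenvalue m d A lam"
  shows "\<exists>\<mu>. einstein_eigenvalue m d A \<mu> \<and> lam \<le> \<mu>"
proof -
  obtain x where x1: "(\<Sum>i<d. x i ^ 2) = 1" and xe: "\<forall>i<d. tensor_apply m d A x i = lam * x i"
    using Z unfolding Z_eigenvalue_def by blast
  define n where "n = d ^ m"
  define dg where "dg = digits m d"
  define P where "P = (\<lambda>l. prod_list (map x l))"
  define C where "C = (\<lambda>a b. A (dg a @ dg b))"
  define y where "y = (\<lambda>a. P (dg a))"
  have bij: "bij_betw dg {..<n} (idx_lists m d)" unfolding dg_def n_def by (rule digits_bij[OF d1])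
  have y1: "(\<Sum>a<n. y a ^ 2) = 1"
  proof -
    have "(\<Sum>a<n. y a ^ 2) = (\<Sum>l\<in>idx_lists m d. (P l)^2)"
      unfolding y_def by (rule sum.reindex_bij_betw[OF bij])
    also have "\<dots> = 1" unfolding P_def sum_sq_prod x1 by simp
    finally show ?thesis .
  qed
  have symC: "\<forall>a<n. \<forall>b<n. C a b = C b a"
    using sy digits_in[OF d1] unfolding C_def einstein_symmetric_def dg_def by blast
  have q: "qf n C y y = lam"
  proof -
    have "qf n C y y = (\<Sum>a<n. \<Sum>q\<in>idx_lists m d. A (dg a @ q) * P (dg a) * P q)"
      unfolding qf_def C_def y_def
      by (rule sum.cong[OF refl], rule sum.reindex_bij_betw[OF bij])
    also have "\<dots> = (\<Sum>p\<in>idx_lists m d. \<Sum>q\<in>idx_lists m d. A (p @ q) * P p * P q)"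
      by (rule sum.reindex_bij_betw[OF bij])
    also have "\<dots> = (\<Sum>l\<in>idx_lists (m + m) d. A l * P l)"
      unfolding sum_idx_append P_def by (simp add: mult.assoc)
    also have "m + m = Suc (2 * m - 1)" using \<open>m \<ge> 1\<close> by simp
    also have "(\<Sum>l\<in>idx_lists (Suc (2 * m - 1)) d. A l * P l)
        = (\<Sum>i<d. x i * tensor_apply m d A x i)"
      unfolding sum_idx_Suc tensor_apply_def sum_distrib_left
    proof (rule sum.cong[OF refl], rule sum.cong[OF refl])
      fix i js assume js: "js \<in> idx_lists (2 * m - 1) d"
      hence "length js = 2 * m - 1" by (simp add: idx_lists_def)
      hence "(\<Prod>k<2 * m - 1. x (js ! k)) = P js" unfolding P_def using prod_nth_eq by metis
      thus "A (i # js) * P (i # js) = x i * (A (i # js) * (\<Prod>k<2 * m - 1. x (js ! k)))"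
        by (simp add: P_def)
    qed
    also have "\<dots> = (\<Sum>i<d. lam * x i ^ 2)"
      using xe by (intro sum.cong) (auto simp: power2_eq_square)
    also have "\<dots> = lam" using x1 by (simp add: sum_distrib_left[symmetric])
    finally show ?thesis .
  qed
  obtain \<mu> v where ev: "\<forall>i<n. (\<Sum>j<n. C i j * v j) = \<mu> * v i" and nz: "\<exists>i<n. v i \<noteq> 0"
      and le: "qf n C y y \<le> \<mu>"
    using sym_max_eig[OF symC y1] by blast
  have M: "unfold_mat m d A = mat n n (\<lambda>(i, j). C i j)"
    unfolding unfold_mat_def C_def dg_def n_def by simp
  have "eigenvector (unfold_mat m d A) (vec n v) \<mu>"
    unfolding eigenvector_def M
  proof (intro conjI)
    show "vec n v \<in> carrier_vec (dim_row (mat n n (\<lambda>(i, j). C i j)))" by simp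
    show "vec n v \<noteq> 0\<^sub>v (dim_row (mat n n (\<lambda>(i, j). C i j)))"
      using nz by (auto simp: vec_eq_iff)
    show "mat n n (\<lambda>(i, j). C i j) *\<^sub>v vec n v = \<mu> \<cdot>\<^sub>v vec n v"
      using ev by (auto intro!: eq_vecI simp: mult_mat_vec_def scalar_prod_def row_def lessThan_atLeast0)
  qed
  hence "einstein_eigenvalue m d A \<mu>" unfolding einstein_eigenvalue_def eigenvalue_def by blast
  thus ?thesis using le q by auto
qed

theorem lemma2p4:
  fixes m d :: nat and A :: tensor
  assumes "m \<ge> 1" and "d \<ge> 1"
    and "einstein_symmetric m d A"
    and "\<exists>lam. Z_eigenvalue m d A lam"
  shows "lambda_E_max m d A \<ge> lambda_Z_max m d A"
proof -
  define M where "M = unfold_mat m d A"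
  have Mc: "M \<in> carrier_mat (d^m) (d^m)" unfolding M_def unfold_mat_def by simp
  have cp: "char_poly M \<noteq> 0"
    using degree_monic_char_poly[OF Mc] by auto
  have fin: "finite {lam. einstein_eigenvalue m d A lam}"
  proof (rule finite_subset[OF _ poly_roots_finite[OF cp]])
    show "{lam. einstein_eigenvalue m d A lam} \<subseteq> {x. poly (char_poly M) x = 0}"
      using eigenvalue_root_char_poly[OF Mc] unfolding einstein_eigenvalue_def M_def by auto
  qed
  show ?thesis
    unfolding lambda_Z_max_def lambda_E_max_def
  proof (rule cSup_least)
    show "{lam. Z_eigenvalue m d A lam} \<noteq> {}" using assms(4) by auto
    fix lam assume "lam \<in> {lam. Z_eigenvalue m d A lam}"
    then obtain \<mu> where "einstein_eigenvalue m d A \<mu>" "lam \<le> \<mu>"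
      using Z_le_eig[OF assms(1-3)] by auto
    thus "lam \<le> Max {lam. einstein_eigenvalue m d A lam}"
      using fin by (meson Max_ge mem_Collect_eq order_trans)
  qed
qed

end
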